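(* Let $S\subseteq\mathbb{N}_0$ be a free numerical semigroup. Then $S=\langle G'\rangle$ for some sequence $G'$ that is both telescopic and minimal.
   Context: For a finite sequence $G=(g_1,\dots,g_k)\in\mathbb{N}_0^k$, $\langle G\rangle$ is the set of $\mathbb{N}_0$-linear combinations of its entries; $G$ is minimal if no proper subsequence generates the same set. With $G_i=(g_1,\dots,g_i)$, $d_i=\gcd(G_i)$, and (for $g_1+g_2>0$, or $g_1>0$ if $k=1$) $c_j=d_{j-1}/d_j$ for $2\le j\le k$, $G$ is telescopic if $c_jg_j\in\langle G_{j-1}\rangle$ for all $2\le j\le k$. A numerical semigroup is a submonoid of $\mathbb{N}_0$ with finite complement; it is free if it equals $\langle G\rangle$ for some telescopic sequence $G$ with $\gcd(G)=1$ (not necessarily minimal). *)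

theory Defs
  imports Main "HOL-Library.Sublist"
begin

definition gen :: "nat list \<Rightarrow> nat set" where
  "gen G = {\<Sum>i<length G. a i * G ! i | a :: nat \<Rightarrow> nat. True}"

definition minimal_seq :: "nat list \<Rightarrow> bool" where
  "minimal_seq G \<longleftrightarrow> (\<forall>H. strict_subseq H G \<longrightarrow> gen H \<noteq> gen G)"

definition dseq :: "nat list \<Rightarrow> nat \<Rightarrow> nat" where
  "dseq G i = Gcd (set (take i G))"

definition cseq :: "nat list \<Rightarrow> nat \<Rightarrow> nat" where
  "cseq G j = dseq G (j - 1) div dseq G j"

(* telescopic (1-based index j, entry g_j = G ! (j-1)); includes the standing
   nondegeneracy assumption g_1 + g_2 > 0 (resp. g_1 > 0 if k = 1) *)
definition telescopic :: "nat list \<Rightarrow> bool" where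
  "telescopic G \<longleftrightarrow>
     G \<noteq> [] \<and>
     (length G = 1 \<longrightarrow> G ! 0 > 0) \<and>
     (length G \<ge> 2 \<longrightarrow> G ! 0 + G ! 1 > 0) \<and>
     (\<forall>j. 2 \<le> j \<and> j \<le> length G \<longrightarrow> cseq G j * G ! (j - 1) \<in> gen (take (j - 1) G))"

definition numerical_semigroup :: "nat set \<Rightarrow> bool" where
  "numerical_semigroup S \<longleftrightarrow> 0 \<in> S \<and> (\<forall>x\<in>S. \<forall>y\<in>S. x + y \<in> S) \<and> finite (UNIV - S)"

definition free_ns :: "nat set \<Rightarrow> bool" where
  "free_ns S \<longleftrightarrow> numerical_semigroup S \<and>
     (\<exists>G. telescopic G \<and> Gcd (set G) = 1 \<and> S = gen G)"

end

theory Submission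
  imports Defs
begin


inductive_set M :: "nat set \<Rightarrow> nat set" for A where
  M0: "0 \<in> M A"
| Madd: "x \<in> A \<Longrightarrow> y \<in> M A \<Longrightarrow> x + y \<in> M A"

lemma M_base: "x \<in> A \<Longrightarrow> x \<in> M A"
  using Madd[OF _ M0, of x A] by simp

lemma M_plus: "x \<in> M A \<Longrightarrow> y \<in> M A \<Longrightarrow> x + y \<in> M A"
  by (induction x rule: M.induct) (auto simp: add.assoc intro: Madd)

lemma M_mult: "x \<in> M A \<Longrightarrow> k * x \<in> M A"
  by (induction k) (auto intro: M0 M_plus)

lemma M_sub: "A \<subseteq> M B \<Longrightarrow> M A \<subseteq> M B"
proof
  fix x assume a: "A \<subseteq> M B" and b: "x \<in> M A" from b show "x \<in> M B"
    by (induction x rule: M.induct) (use a in \<open>auto intro: M0 M_plus\<close>)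
qed

lemma M_mono: "A \<subseteq> B \<Longrightarrow> M A \<subseteq> M B"
  by (rule M_sub) (auto intro: M_base)

lemma M_insert: "M (insert g A) = {m * g + t | m t. t \<in> M A}"
proof
  show "M (insert g A) \<subseteq> {m * g + t | m t. t \<in> M A}"
  proof
    fix x assume "x \<in> M (insert g A)"
    then show "x \<in> {m * g + t | m t. t \<in> M A}"
    proof (induction x rule: M.induct)
      case M0 then show ?case by (auto intro!: exI[of _ 0] M.M0)
    next
      case (Madd x y)
      then obtain m t where y: "y = m * g + t" "t \<in> M A" by auto
      show ?case
      proof (cases "x = g")
        case True then show ?thesis using y by (intro CollectI exI[of _ "Suc m"] exI[of _ t]) auto
      next
        case False then have "x \<in> A" using Madd by auto
        then show ?thesis using y by (intro CollectI exI[of _ m] exI[of _ "x + t"]) (auto intro: M.Madd)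
      qed
    qed
  qed
next
  have "M A \<subseteq> M (insert g A)" by (rule M_mono) auto
  moreover have "g \<in> M (insert g A)" by (rule M_base) auto
  ultimately show "{m * g + t | m t. t \<in> M A} \<subseteq> M (insert g A)"
    by (auto intro!: M_plus M_mult)
qed

lemma M_scale: "M ((*) d ` A) = (*) d ` M A"
proof
  show "M ((*) d ` A) \<subseteq> (*) d ` M A"
  proof
    fix x assume "x \<in> M ((*) d ` A)" then show "x \<in> (*) d ` M A"
    proof (induction x rule: M.induct)
      case M0 then show ?case using M.M0 by force
    next
      case (Madd x y) then obtain a b where "x = d * a" "a \<in> A" "y = d * b" "b \<in> M A" by auto
      then show ?case by (metis distrib_left image_eqI M.Madd)
    qed
  qed
next
  show "(*) d ` M A \<subseteq> M ((*) d ` A)"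
  proof
    fix x assume "x \<in> (*) d ` M A"
    then obtain y where "y \<in> M A" "x = d * y" by auto
    then show "x \<in> M ((*) d ` A)"
    proof (induction y arbitrary: x rule: M.induct)
      case M0 then show ?case by (simp add: M.M0)
    next
      case (Madd a b) then show ?case by (auto simp: distrib_left intro!: M.Madd)
    qed
  qed
qed

lemma gen_Nil: "gen [] = {0}"
  by (simp add: gen_def)

lemma gen_Cons: "gen (x # G) = {m * x + t | m t. t \<in> gen G}"
proof
  show "gen (x # G) \<subseteq> {m * x + t | m t. t \<in> gen G}"
  proof
    fix y assume "y \<in> gen (x # G)"
    then obtain a where y: "y = (\<Sum>i<length (x#G). a i * (x#G) ! i)" by (auto simp: gen_def)
    have "y = a 0 * x + (\<Sum>i<length G. a (Suc i) * G ! i)"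
      unfolding y by (simp only: length_Cons sum.lessThan_Suc_shift) simp
    moreover have "(\<Sum>i<length G. a (Suc i) * G ! i) \<in> gen G" unfolding gen_def by (intro CollectI exI[of _ "\<lambda>i. a (Suc i)"]) simp
    ultimately show "y \<in> {m * x + t | m t. t \<in> gen G}" by blast
  qed
next
  show "{m * x + t | m t. t \<in> gen G} \<subseteq> gen (x # G)"
  proof
    fix y assume "y \<in> {m * x + t | m t. t \<in> gen G}"
    then obtain m b where y: "y = m * x + (\<Sum>i<length G. b i * G ! i)" by (auto simp: gen_def)
    define a where "a = (\<lambda>i. case i of 0 \<Rightarrow> m | Suc j \<Rightarrow> b j)"
    have "y = (\<Sum>i<length (x#G). a i * (x#G) ! i)"
      unfolding y by (simp only: length_Cons sum.lessThan_Suc_shift) (simp add: a_def)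
    then show "y \<in> gen (x # G)" by (auto simp: gen_def)
  qed
qed

lemma gen_M: "gen G = M (set G)"
proof (induction G)
  case Nil
  have "M {} = {0}"
  proof
    show "M {} \<subseteq> {0}" proof fix x assume "x \<in> M {}" then show "x \<in> {0}"
        by (induction rule: M.induct) auto qed
  qed (auto intro: M0)
  then show ?case by (simp add: gen_Nil)
next
  case (Cons x G) then show ?case by (simp add: gen_Cons M_insert)
qed

lemma Gcd_M: "Gcd (M A) = (Gcd A :: nat)"
proof (rule dvd_antisym)
  show "Gcd (M A) dvd Gcd A" by (rule Gcd_greatest) (auto intro: M_base Gcd_dvd)
  have "Gcd A dvd x" if "x \<in> M A" for x using that
    by (induction rule: M.induct) auto
  then show "Gcd A dvd Gcd (M A)" by (auto intro: Gcd_greatest)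
qed




definition indep :: "nat set \<Rightarrow> bool" where
  "indep A \<longleftrightarrow> (\<forall>x\<in>A. x \<notin> M (A - {x}))"

lemma M_eq_if: "x \<in> M (A - {x}) \<Longrightarrow> M A = M (A - {x})"
proof
  assume h: "x \<in> M (A - {x})"
  show "M A \<subseteq> M (A - {x})" by (rule M_sub) (use h in \<open>auto intro: M_base\<close>)
qed (rule M_mono, auto)

lemma min_imp:
  assumes "minimal_seq L" shows "distinct L" "indep (set L)"
proof -
  show "distinct L"
  proof (rule ccontr)
    assume "\<not> distinct L"
    then obtain xs ys zs y where L: "L = xs@[y]@ys@[y]@zs" using not_distinct_decomp by blast
    let ?H = "xs @ [y] @ ys @ zs"
    have "subseq ?H L"
    proof -
    have "subseq zs ([y] @ zs)" by (rule list_emb_append2) (rule subseq_order.refl)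
    then have "subseq (ys @ zs) (ys @ [y] @ zs)" by (simp only: subseq_append')
    then have "subseq ((xs @ [y]) @ (ys @ zs)) ((xs @ [y]) @ (ys @ [y] @ zs))" by (rule iffD2[OF subseq_append'])
    then show "subseq ?H L" unfolding L by (simp only: append_assoc)
    qed
    moreover have "length ?H \<noteq> length L" unfolding L by simp
    then have "?H \<noteq> L" by metis
    ultimately have "gen ?H \<noteq> gen L" using assms unfolding minimal_seq_def strict_subseq_def by blast
    moreover have "set ?H = set L" unfolding L by auto
    ultimately show False unfolding gen_M by simp
  qed
  show "indep (set L)" unfolding indep_def
  proof
    fix x assume x: "x \<in> set L"
    show "x \<notin> M (set L - {x})"
    proof
      assume h: "x \<in> M (set L - {x})"
      let ?H = "filter (\<lambda>y. y \<noteq> x) L"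
      have "subseq ?H L" by (rule subseq_filter_left)
      moreover have "x \<notin> set ?H" by simp
      then have "?H \<noteq> L" using x by metis
      moreover have "set ?H = set L - {x}" by auto
      ultimately have "gen ?H \<noteq> gen L" using assms unfolding minimal_seq_def strict_subseq_def by blast
      then show False using M_eq_if[OF h] \<open>set ?H = set L - {x}\<close> unfolding gen_M by simp
    qed
  qed
qed

lemma imp_min:
  assumes d: "distinct L" and i: "indep (set L)" shows "minimal_seq L"
  unfolding minimal_seq_def
proof (intro allI impI)
  fix H assume "strict_subseq H L"
  then have s: "subseq H L" "H \<noteq> L" unfolding strict_subseq_def by auto
  have sub: "set H \<subseteq> set L"
  proof
    fix x assume "x \<in> set H"
    from list_emb_set[OF s(1) this] show "x \<in> set L" by metis
  qed
  have "set H \<noteq> set L"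
  proof
    assume e: "set H = set L"
    have "length L = card (set L)" using d by (simp add: distinct_card)
    also have "\<dots> \<le> length H" unfolding e[symmetric] by (rule card_length)
    finally have "length H = length L" using list_emb_length[OF s(1)] by simp
    then show False using subseq_same_length[OF s(1)] s(2) by simp
  qed
  then obtain x where x: "x \<in> set L" "x \<notin> set H" using sub by blast
  have "M (set H) \<subseteq> M (set L - {x})" by (rule M_mono) (use sub x in auto)
  moreover have "x \<notin> M (set L - {x})" using i x unfolding indep_def by auto
  moreover have "x \<in> M (set L)" using x by (auto intro: M_base)
  ultimately show "gen H \<noteq> gen L" unfolding gen_M by blast
qed

lemma indep_pos: "indep A \<Longrightarrow> x \<in> A \<Longrightarrow> x > 0"
  unfolding indep_def using M0[of "A - {0}"] by (cases "x = 0") auto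




definition cond :: "nat list \<Rightarrow> bool" where
  "cond G \<longleftrightarrow> (\<forall>j. 2 \<le> j \<and> j \<le> length G \<longrightarrow> cseq G j * G ! (j - 1) \<in> gen (take (j - 1) G))"

lemma Gcd_scale: "Gcd ((*) d ` A) = d * Gcd (A :: nat set)"
  by (simp add: Gcd_mult)

lemma Gcd_phi:
  assumes "coprime g (d::nat)"
  shows "Gcd ((\<lambda>x. if x = g then x else d * x) ` S) = (if g \<in> S then Gcd S else d * Gcd S)"
proof (cases "g \<in> S")
  case True
  have "(\<lambda>x. if x = g then x else d * x) ` S = insert g ((*) d ` (S - {g}))"
    using True by auto
  then have "Gcd ((\<lambda>x. if x = g then x else d * x) ` S) = gcd g (d * Gcd (S - {g}))"
    by (simp add: Gcd_scale)
  also have "\<dots> = gcd g (Gcd (S - {g}))" using assms by (rule gcd_mult_right_left_cancel)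
  also have "\<dots> = Gcd (insert g (S - {g}))" by (rule Gcd_insert[symmetric])
  also have "insert g (S - {g}) = S" using True by auto
  finally show ?thesis using True by simp
next
  case False
  then have "(\<lambda>x. if x = g then x else d * x) ` S = (*) d ` S" by auto
  then show ?thesis using False by (simp add: Gcd_scale)
qed

lemma M_phi:
  assumes "y \<in> M S"
  shows "d * y \<in> M ((\<lambda>x. if x = g then x else d * x) ` S)"
proof -
  have "(*) d ` S \<subseteq> M ((\<lambda>x. if x = g then x else d * x) ` S)"
  proof
    fix z assume "z \<in> (*) d ` S"
    then obtain x where x: "x \<in> S" "z = d * x" by auto
    show "z \<in> M ((\<lambda>x. if x = g then x else d * x) ` S)"
    proof (cases "x = g")
      case True
      have "g \<in> M ((\<lambda>x. if x = g then x else d * x) ` S)"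
        using x True by (intro M_base) force
      then have "d * g \<in> M ((\<lambda>x. if x = g then x else d * x) ` S)" by (rule M_mult)
      then show ?thesis by (simp only: x(2) True)
    next
      case False then show ?thesis using x by (intro M_base) force
    qed
  qed
  then have "M ((*) d ` S) \<subseteq> M ((\<lambda>x. if x = g then x else d * x) ` S)" by (rule M_sub)
  then show ?thesis using assms M_scale by blast
qed

lemma phi_cond:
  assumes c: "cond L" and d: "d > 0" and cop: "coprime g d"
  shows "cond (map (\<lambda>x. if x = g then x else d * x) L)"
  unfolding cond_def
proof (intro allI impI)
  define \<phi> where "\<phi> = (\<lambda>x. if x = g then x else d * x)"
  fix j assume j: "2 \<le> j \<and> j \<le> length (map \<phi> L)"
  define P where "P = take (j - 1) L"
  define h where "h = L ! (j - 1)"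
  have jl: "j - 1 < length L" using j by (cases j) auto
  have tj: "take j L = P @ [h]"
  proof -
    have "take (Suc (j - 1)) L = P @ [h]" unfolding P_def h_def by (rule take_Suc_conv_app_nth[OF jl])
    moreover have "Suc (j - 1) = j" using j by simp
    ultimately show ?thesis by simp
  qed
  have ch: "cseq L j * h \<in> M (set P)" using c j unfolding cond_def P_def h_def gen_M by auto
  define e1 where "e1 = Gcd (set P)"
  define e2 where "e2 = Gcd (insert h (set P))"
  have cL: "cseq L j = e1 div e2" unfolding cseq_def dseq_def e1_def e2_def P_def using tj P_def by simp
  have e21: "e2 dvd e1" unfolding e1_def e2_def Gcd_insert by (rule gcd_dvd2)
  have tP: "take (j - 1) (map \<phi> L) = map \<phi> P" unfolding P_def by (simp add: take_map)
  have tPj: "take j (map \<phi> L) = map \<phi> (P @ [h])" using tj by (simp add: take_map)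
  have nth: "map \<phi> L ! (j - 1) = \<phi> h" unfolding h_def by (rule nth_map[OF jl])
  have d1: "dseq (map \<phi> L) (j - 1) = (if g \<in> set P then e1 else d * e1)"
    unfolding dseq_def tP unfolding e1_def \<phi>_def set_map by (rule Gcd_phi[OF cop])
  have sPh: "set (P @ [h]) = insert h (set P)" by simp
  have d2: "dseq (map \<phi> L) j = (if g \<in> insert h (set P) then e2 else d * e2)"
    unfolding dseq_def tPj unfolding set_map sPh e2_def \<phi>_def by (rule Gcd_phi[OF cop])
  have cc: "cseq (map \<phi> L) j = dseq (map \<phi> L) (j - 1) div dseq (map \<phi> L) j" by (simp add: cseq_def)
  have scale: "d * y \<in> M (\<phi> ` set P)" if "y \<in> M (set P)" for y
    unfolding \<phi>_def by (rule M_phi[OF that])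
  have goal: "cseq (map \<phi> L) j * \<phi> h \<in> M (\<phi> ` set P)"
  proof (cases "g \<in> set P")
    case True
    then have cs: "cseq (map \<phi> L) j = cseq L j" using cc d1 d2 cL by simp
    show ?thesis
    proof (cases "h = g")
      case True
      have "g \<in> M (\<phi> ` set P)" using \<open>g \<in> set P\<close> by (intro M_base) (force simp: \<phi>_def)
      then show ?thesis using True M_mult by (simp add: \<phi>_def)
    next
      case False
      then show ?thesis using cs scale[OF ch] by (simp add: \<phi>_def mult.left_commute)
    qed
  next
    case False
    show ?thesis
    proof (cases "h = g")
      case True
      have "cseq (map \<phi> L) j = (d * e1) div e2" using cc d1 d2 False True by simp
      also have "\<dots> = d * (e1 div e2)" using e21 by (simp add: div_mult_swap)
      finally have "cseq (map \<phi> L) j * \<phi> h = d * (cseq L j * h)" using True cL by (simp add: \<phi>_def)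
      then show ?thesis using scale[OF ch] by simp
    next
      case False2: False
      have "cseq (map \<phi> L) j = (d * e1) div (d * e2)" using cc d1 d2 False False2 by simp
      also have "\<dots> = e1 div e2" using d by simp
      finally have "cseq (map \<phi> L) j * \<phi> h = d * (cseq L j * h)" using False2 cL by (simp add: \<phi>_def)
      then show ?thesis using scale[OF ch] by simp
    qed
  qed
  show "cseq (map \<phi> L) j * map \<phi> L ! (j - 1) \<in> gen (take (j - 1) (map \<phi> L))"
    using goal unfolding nth tP gen_M by simp
qed




lemma M_empty: "M {} = {0}"
  using gen_M[of "[]"] gen_Nil by simp

lemma M_one: "1 \<in> A \<Longrightarrow> M A = UNIV"
proof -
  assume "1 \<in> A"
  then have "1 \<in> M A" by (rule M_base)
  then have "n * 1 \<in> M A" for n by (rule M_mult)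
  then show "M A = UNIV" by auto
qed

lemma prefix_facts:
  assumes "1 \<le> j" "j \<le> length B"
  shows "take (j - 1) (B @ C) = take (j - 1) B" "(B @ C) ! (j - 1) = B ! (j - 1)"
    "cseq (B @ C) j = cseq B j"
proof -
  show "take (j - 1) (B @ C) = take (j - 1) B" using assms by simp
  have jl: "j - 1 < length B" using assms by linarith
  show "(B @ C) ! (j - 1) = B ! (j - 1)" by (rule nth_append_left[OF jl])
  have t1: "take j (B @ C) = take j B" using assms by simp
  have t2: "take (j - 1) (B @ C) = take (j - 1) B" using assms by simp
  show "cseq (B @ C) j = cseq B j" unfolding cseq_def dseq_def by (simp only: t1 t2)
qed

lemma cond_prefix: "cond (B @ C) \<Longrightarrow> cond B"
  unfolding cond_def
proof (intro allI impI)
  fix j assume c: "\<forall>j. 2 \<le> j \<and> j \<le> length (B @ C) \<longrightarrow> cseq (B @ C) j * (B @ C) ! (j - 1) \<in> gen (take (j - 1) (B @ C))"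
    and j: "2 \<le> j \<and> j \<le> length B"
  have jj: "2 \<le> j \<and> j \<le> length (B @ C)" using j by simp
  have j1: "1 \<le> j" and jB: "j \<le> length B" using j by auto
  have "cseq (B @ C) j * (B @ C) ! (j - 1) \<in> gen (take (j - 1) (B @ C))" using c jj by blast
  then show "cseq B j * B ! (j - 1) \<in> gen (take (j - 1) B)"
    by (simp only: prefix_facts[OF j1 jB])
qed

lemma cond_snoc: "cond L \<Longrightarrow> x \<in> gen L \<Longrightarrow> cond (L @ [x])"
  unfolding cond_def
proof (intro allI impI)
  fix j assume c: "\<forall>j. 2 \<le> j \<and> j \<le> length L \<longrightarrow> cseq L j * L ! (j - 1) \<in> gen (take (j - 1) L)"
    and x: "x \<in> gen L" and j: "2 \<le> j \<and> j \<le> length (L @ [x])"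
  show "cseq (L @ [x]) j * (L @ [x]) ! (j - 1) \<in> gen (take (j - 1) (L @ [x]))"
  proof (cases "j \<le> length L")
    case True
    then show ?thesis using c j prefix_facts[of j L "[x]"] by simp
  next
    case False
    moreover have "length (L @ [x]) = Suc (length L)" by simp
    ultimately have "j - 1 = length L" using j by linarith
    then show ?thesis using x M_mult unfolding gen_M by simp
  qed
qed

lemma cond_scale:
  assumes d: "d > 0" and c: "cond (map ((*) d) H)" shows "cond H"
  unfolding cond_def
proof (intro allI impI)
  fix j assume j: "2 \<le> j \<and> j \<le> length H"
  have ds: "dseq (map ((*) d) H) i = d * dseq H i" for i
    unfolding dseq_def take_map set_map by (rule Gcd_scale)
  have cs: "cseq (map ((*) d) H) j = cseq H j" unfolding cseq_def ds using d by simp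
  have jl: "j - 1 < length H" using j by (cases j) auto
  have "cseq (map ((*) d) H) j * map ((*) d) H ! (j - 1) \<in> gen (take (j - 1) (map ((*) d) H))"
    using c j unfolding cond_def by simp
  then have "d * (cseq H j * H ! (j - 1)) \<in> (*) d ` M (set (take (j - 1) H))"
    unfolding cs nth_map[OF jl] gen_M take_map set_map M_scale by (simp add: mult.left_commute)
  then obtain t where "t \<in> M (set (take (j - 1) H))" "d * (cseq H j * H ! (j - 1)) = d * t" by auto
  then show "cseq H j * H ! (j - 1) \<in> gen (take (j - 1) H)" using d unfolding gen_M by simp
qed

lemma arith_key:
  fixes y m g t b r :: nat
  assumes "y > 0" "y = m * g + t" "g = b * y + r" "m \<ge> 1" "b \<ge> 1"
  shows "g = y"
proof -
  have "m * b \<ge> 1" using assms(4,5) by simp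
  then have mb: "m * b * y \<ge> y" by simp
  have eq: "y = m * b * y + m * r + t" using assms(2,3) by (simp add: algebra_simps)
  then have "m * r + t = 0" "m * b * y = y" using mb by linarith+
  then have "r = 0" using assms(4) by simp
  have "m * b = 1" using \<open>m * b * y = y\<close> assms(1) by simp
  then have "b = 1" by simp
  then show ?thesis using assms(3) \<open>r = 0\<close> by simp
qed

lemma indep_glue:
  assumes i: "indep A" and gA: "g \<in> M A" and cop: "coprime g d" and d2: "d \<ge> 2"
  shows "indep ((\<lambda>x. if x = g then x else d * x) ` insert g A)"
proof -
  define \<phi> where "\<phi> = (\<lambda>x. if x = g then x else d * x)"
  have ndvd: "\<not> d dvd g"
  proof
    assume "d dvd g"
    then have "d dvd gcd g d" by simp
    then show False using cop d2 by simp
  qed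
  have neq: "d * z \<noteq> g" for z using ndvd by auto
  have X: "\<phi> ` insert g A = insert g ((*) d ` (A - {g}))" unfolding \<phi>_def by auto
  show ?thesis unfolding indep_def \<phi>_def[symmetric] X
  proof
    fix x assume x: "x \<in> insert g ((*) d ` (A - {g}))"
    show "x \<notin> M (insert g ((*) d ` (A - {g})) - {x})"
    proof (cases "x = g")
      case True
      have "insert g ((*) d ` (A - {g})) - {x} = (*) d ` (A - {g})" using True neq by auto
      then show ?thesis using True ndvd M_scale by auto
    next
      case False
      then obtain y where y: "y \<in> A" "y \<noteq> g" "x = d * y" using x by auto
      have ypos: "y > 0" using indep_pos[OF i y(1)] .
      have "insert g ((*) d ` (A - {g})) - {x} = insert g ((*) d ` (A - {g, y}))"
        using y neq d2 by auto
      also have "M \<dots> = {m * g + t | m t. t \<in> (*) d ` M (A - {g, y})}" by (simp add: M_insert M_scale)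
      finally have Meq: "M (insert g ((*) d ` (A - {g})) - {x}) = {m * g + t | m t. t \<in> (*) d ` M (A - {g, y})}" .
      show ?thesis
      proof
        assume "x \<in> M (insert g ((*) d ` (A - {g})) - {x})"
        then obtain m t where mt: "d * y = m * g + d * t" "t \<in> M (A - {g, y})" using Meq y by auto
        have "d dvd m * g + d * t" using mt(1)[symmetric] by (metis dvd_triv_left)
        then have "d dvd m * g" by (simp add: dvd_add_left_iff)
        then have "d dvd m" using cop by (simp add: coprime_dvd_mult_left_iff coprime_commute)
        then obtain m' where m': "m = d * m'" by auto
        have "d * y = d * (m' * g + t)" using mt(1) unfolding m' by (simp add: algebra_simps)
        then have yeq: "y = m' * g + t" using d2 by simp
        have "insert y (A - {y}) = A" using y by auto
        then have "M A = {m * y + t | m t. t \<in> M (A - {y})}" using M_insert[of y "A - {y}"] by simp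
        then obtain b r where br: "g = b * y + r" "r \<in> M (A - {y})" using gA by auto
        have tM: "t \<in> M (A - {y})" using mt(2) M_mono[of "A - {g, y}" "A - {y}"] by auto
        have notin: "y \<notin> M (A - {y})" using i y(1) unfolding indep_def by auto
        show False
        proof (cases "m' = 0")
          case True then show False using yeq tM notin by simp
        next
          case m0: False
          show False
          proof (cases "b = 0")
            case True
            then have "g \<in> M (A - {y})" using br by simp
            then have "m' * g + t \<in> M (A - {y})" using tM M_mult M_plus by blast
            then show False using yeq notin by simp
          next
            case False
            then have "g = y" using arith_key[OF ypos yeq br(1)] m0 by simp
            then show False using y(2) by simp
          qed
        qed
      qed
    qed
  qed
qed




lemma one_ok: "telescopic [1] \<and> minimal_seq [1]"
proof
  show "telescopic [1]" unfolding telescopic_def by auto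
  have "indep {1}" unfolding indep_def using M_empty by simp
  then show "minimal_seq [1]" by (intro imp_min) auto
qed

lemma gen_one: "gen [1] = UNIV"
  unfolding gen_M by (rule M_one) simp

lemma glue_gen:
  assumes MA: "M A = M H" and d: "d > 0"
  shows "M ((\<lambda>x. if x = g then x else d * x) ` insert g A) = M (insert g ((*) d ` H))"
proof
  show "M ((\<lambda>x. if x = g then x else d * x) ` insert g A) \<subseteq> M (insert g ((*) d ` H))"
  proof (rule M_sub, rule subsetI)
    fix z assume "z \<in> (\<lambda>x. if x = g then x else d * x) ` insert g A"
    then obtain x where x: "x \<in> insert g A" "z = (if x = g then x else d * x)" by blast
    show "z \<in> M (insert g ((*) d ` H))"
    proof (cases "x = g")
      case True then show ?thesis using x by (auto intro: M_base)
    next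
      case False
      then have "x \<in> A" using x by simp
      then have "x \<in> M H" using MA M_base by blast
      then have "d * x \<in> M ((*) d ` H)" using M_scale by blast
      moreover have "M ((*) d ` H) \<subseteq> M (insert g ((*) d ` H))" by (rule M_mono) auto
      ultimately show ?thesis using x False by auto
    qed
  qed
  show "M (insert g ((*) d ` H)) \<subseteq> M ((\<lambda>x. if x = g then x else d * x) ` insert g A)"
  proof (rule M_sub, rule subsetI)
    fix z assume z: "z \<in> insert g ((*) d ` H)"
    show "z \<in> M ((\<lambda>x. if x = g then x else d * x) ` insert g A)"
    proof (cases "z = g")
      case True then show ?thesis by (intro M_base) force
    next
      case False
      then obtain y where y: "y \<in> H" "z = d * y" using z by auto
      have "y \<in> M A" using MA y M_base by blast
      moreover have "M A \<subseteq> M (insert g A)" by (rule M_mono) auto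
      ultimately have "y \<in> M (insert g A)" by blast
      then show ?thesis using M_phi y(2) by blast
    qed
  qed
qed

lemma main_ind:
  "\<forall>G. length G = n \<longrightarrow> G \<noteq> [] \<longrightarrow> cond G \<longrightarrow> Gcd (set G) = 1 \<longrightarrow>
     (\<exists>G'. telescopic G' \<and> minimal_seq G' \<and> gen G' = gen G)"
proof (induction n rule: less_induct)
  case (less n)
  show ?case
  proof (intro allI impI)
    fix G assume len: "length G = n" and ne: "G \<noteq> []" and cG: "cond G" and g1: "Gcd (set G) = 1"
    show "\<exists>G'. telescopic G' \<and> minimal_seq G' \<and> gen G' = gen G"
    proof (cases "length G = 1")
      case True
      then obtain x where Gx: "G = [x]" by (metis length_0_conv length_Suc_conv One_nat_def)
      then have "x = 1" using g1 by simp
      then show ?thesis using Gx one_ok by blast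
    next
      case False
      define B where "B = butlast G"
      define g where "g = last G"
      have GB: "G = B @ [g]" unfolding B_def g_def using ne by simp
      have lenB: "length B = n - 1" unfolding B_def using len by simp
      have "length G \<noteq> 0" using ne by simp
      then have l2: "length G \<ge> 2" using False by linarith
      have "length B \<ge> 1" using l2 unfolding B_def by simp
      then have Bne: "B \<noteq> []" by auto
      define d where "d = Gcd (set B)"
      have sG: "set G = insert g (set B)" using GB by auto
      have gd: "gcd g d = 1" using g1 sG unfolding d_def by (simp add: Gcd_insert)
      have dg: "d * g \<in> M (set B)"
      proof -
        define k where "k = length G"
        have k2: "2 \<le> k \<and> k \<le> length G" using l2 unfolding k_def by simp
        have "cseq G k * G ! (k - 1) \<in> gen (take (k - 1) G)" using cG k2 unfolding cond_def by blast
        moreover have "take (k - 1) G = B" unfolding k_def B_def by (simp add: butlast_conv_take)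
        moreover have "G ! (k - 1) = g" unfolding k_def g_def using ne by (simp add: last_conv_nth)
        moreover have "cseq G k = d"
        proof -
          have "take k G = G" unfolding k_def by simp
          then have "dseq G k = 1" unfolding dseq_def using g1 by simp
          moreover have "dseq G (k - 1) = d" unfolding dseq_def d_def
            using \<open>take (k - 1) G = B\<close> by simp
          ultimately show ?thesis unfolding cseq_def by simp
        qed
        ultimately show ?thesis unfolding gen_M by simp
      qed
      have cB: "cond B" using cG GB cond_prefix by metis
      consider "d = 0" | "d = 1" | "d \<ge> 2" by linarith
      then show ?thesis
      proof cases
        case 1
        then have "g = 1" using gd by simp
        then have "gen G = UNIV" unfolding gen_M using sG by (intro M_one) simp
        then show ?thesis using one_ok gen_one by metis
      next
        case 2
        then have gB: "g \<in> M (set B)" using dg by simp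
        have "M (set G) = M (set B)"
        proof
          show "M (set G) \<subseteq> M (set B)" using sG gB by (intro M_sub) (auto intro: M_base)
          show "M (set B) \<subseteq> M (set G)" using sG by (intro M_mono) auto
        qed
        moreover have "length B < n" using lenB len ne by (cases G) auto
        ultimately show ?thesis using less.IH[of "length B"] Bne cB 2 unfolding d_def gen_M by metis
      next
        case 3
        then have dpos: "d > 0" by simp
        define H where "H = map (\<lambda>x. x div d) B"
        have BH: "B = map ((*) d) H"
        proof -
          have "map (\<lambda>x. d * (x div d)) B = B"
          proof (rule map_idI)
            fix x assume "x \<in> set B"
            then have "d dvd x" unfolding d_def by (rule Gcd_dvd)
            then show "d * (x div d) = x" by simp
          qed
          then show ?thesis unfolding H_def by (simp add: comp_def)
        qed
        have "d = d * Gcd (set H)" using d_def BH by (simp add: Gcd_scale)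
        then have gH1: "Gcd (set H) = 1" using dpos by simp
        have cH: "cond H" using cB BH dpos cond_scale by metis
        have lH: "length H < n" using lenB len ne unfolding H_def by (cases G) auto
        have Hne: "H \<noteq> []" using Bne unfolding H_def by simp
        obtain H' where H': "telescopic H'" "minimal_seq H'" "gen H' = gen H"
          using less.IH[of "length H"] lH Hne cH gH1 by blast
        have gH: "g \<in> M (set H)"
        proof -
          have "d * g \<in> (*) d ` M (set H)" using dg BH M_scale by (metis set_map)
          then obtain t where "t \<in> M (set H)" "d * g = d * t" by auto
          then show ?thesis using dpos by simp
        qed
        define A where "A = set H'"
        have iA: "indep A" and dH': "distinct H'" using min_imp[OF H'(2)] unfolding A_def by auto
        have cH': "cond H'" and H'ne: "H' \<noteq> []" using H'(1) unfolding telescopic_def cond_def by auto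
        have MA: "M A = M (set H)" using H'(3) unfolding gen_M A_def .
        have gA: "g \<in> M A" using gH MA by simp
        have cop: "coprime g d" using gd by (simp add: coprime_iff_gcd_eq_1)
        have ndvd: "\<not> d dvd g"
        proof
          assume "d dvd g"
          then have "d dvd gcd g d" by simp
          then show False using gd 3 by simp
        qed
        define \<phi> where "\<phi> = (\<lambda>x. if x = g then x else d * x)"
        define H'' where "H'' = (if g \<in> A then H' else H' @ [g])"
        have sH'': "set H'' = insert g A" unfolding H''_def A_def by auto
        have cH'': "cond H''"
        proof (cases "g \<in> A")
          case True then show ?thesis using cH' unfolding H''_def by simp
        next
          case False
          have "g \<in> gen H'" using gA unfolding gen_M A_def .
          then show ?thesis using cH' False cond_snoc unfolding H''_def by simp
        qed
        have dH'': "distinct H''" using dH' unfolding H''_def A_def by auto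
        have H''0: "H'' ! 0 = H' ! 0" using H'ne unfolding H''_def by (simp add: nth_append)
        have H''ne: "H'' \<noteq> []" using H'ne unfolding H''_def by simp
        define G' where "G' = map \<phi> H''"
        have G'0: "G' ! 0 > 0"
        proof -
          have "H' ! 0 \<in> A" using H'ne unfolding A_def by simp
          then have "H' ! 0 > 0" using indep_pos[OF iA] by blast
          then show ?thesis using H''0 H''ne dpos unfolding G'_def \<phi>_def by simp
        qed
        have tel: "telescopic G'"
        proof -
          have "cond G'" unfolding G'_def \<phi>_def by (rule phi_cond[OF cH'' dpos cop])
          moreover have "G' \<noteq> []" using H''ne unfolding G'_def by simp
          ultimately show ?thesis using G'0 unfolding telescopic_def cond_def by auto
        qed
        have inj: "inj_on \<phi> (set H'')"
        proof (rule inj_onI)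
          fix x y assume "\<phi> x = \<phi> y"
          then show "x = y" unfolding \<phi>_def using ndvd dpos
            by (auto split: if_splits)
        qed
        have mini: "minimal_seq G'"
        proof (rule imp_min)
          show "distinct G'" unfolding G'_def using dH'' inj by (simp add: distinct_map)
          show "indep (set G')" unfolding G'_def set_map sH'' \<phi>_def
            by (rule indep_glue[OF iA gA cop 3])
        qed
        have "gen G' = gen G"
        proof -
          have "gen G' = M (\<phi> ` insert g A)" unfolding G'_def gen_M set_map sH'' ..
          also have "\<dots> = M (insert g ((*) d ` set H))" unfolding \<phi>_def by (rule glue_gen[OF MA dpos])
          also have "insert g ((*) d ` set H) = set G" using sG BH by simp
          finally show ?thesis unfolding gen_M .
        qed
        then show ?thesis using tel mini by blast
      qed
    qed
  qed
qed

theorem mainTheorem2: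
  fixes S :: "nat set"
  assumes "free_ns S"
  shows "\<exists>G'. telescopic G' \<and> minimal_seq G' \<and> S = gen G'"
proof -
  obtain G where G: "telescopic G" "Gcd (set G) = 1" "S = gen G"
    using assms unfolding free_ns_def by blast
  have "G \<noteq> []" "cond G" using G(1) unfolding telescopic_def cond_def by auto
  then obtain G' where "telescopic G'" "minimal_seq G'" "gen G' = gen G"
    using main_ind G(2) by blast
  then show ?thesis using G(3) by metis
qed


end
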